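(* For $(\varphi,\xi,\theta)$ let $C_\theta=\cos\theta\,(|\uparrow\rangle\langle\uparrow|+|\downarrow\rangle\langle\downarrow|)+\sin\theta\,(|\uparrow\rangle\langle\downarrow|-|\downarrow\rangle\langle\uparrow|)$ and $\gamma_{\varphi,\xi}=\cos\varphi\,|\uparrow\rangle+\sin\varphi\,e^{i\xi}|\downarrow\rangle$. Let $$S=\{(\varphi,0,\theta):\theta\in(0,\pi/2),\ \varphi\in[\theta/2,\ \pi/4+\theta/2]\}\ \cup\ \{(\varphi,\pi,\theta):\theta\in(0,\pi/2),\ \varphi\in(\pi/4-\theta/2,\ (\pi-\theta)/2]\}.$$ Then: (i) for every coin setup $(C,\gamma)$ with $C$ a non-trivial coin there is $(\varphi,\xi,\theta)\in S$ with $(C,\gamma)\sim_l(C_\theta,\gamma_{\varphi,\xi})$; (ii) if $s,s'\in S$ give asymptotically distributionally equivalent setups $(C_\theta,\gamma_{\varphi,\xi})\sim_l(C_{\theta'},\gamma_{\varphi',\xi'})$, then $s=s'$. Thus $(\varphi,\xi,\theta)\mapsto(C_\theta,\gamma_{\varphi,\xi})$ is a bijection from $S$ onto the asymptotic distributional equivalence classes of coin setups with non-trivial coins.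
   Context: Let $\mathcal{H}=\ell^2(\mathbb{Z})\otimes\mathbb{C}^2$, with position basis $\{|j\rangle: j\in\mathbb{Z}\}$ and coin basis $\{|\uparrow\rangle,|\downarrow\rangle\}$. A (quantum) coin is any $C\in U(2)$, written $C=a|\uparrow\rangle\langle\uparrow|+b|\uparrow\rangle\langle\downarrow|+c|\downarrow\rangle\langle\uparrow|+d|\downarrow\rangle\langle\downarrow|$; it is trivial iff $abcd=0$ and non-trivial otherwise. The walk operator is $W(C)=T(\mathbb{1}\otimes C)$ with $T=\sum_{j}|j+1\rangle\langle j|\otimes|\uparrow\rangle\langle\uparrow|+\sum_{j}|j-1\rangle\langle j|\otimes|\downarrow\rangle\langle\downarrow|$. A coin setup is a pair $(C,\gamma)$, $C\in U(2)$, $\gamma=\alpha|\uparrow\rangle+\beta|\downarrow\rangle$ a unit vector; $p_{(C,\gamma)}(j,n)=\langle\psi_n|(|j\rangle\langle j|\otimes\mathbb{1})|\psi_n\rangle$ with $\psi_n=W(C)^n(|0\rangle\otimes\gamma)$. For a setup $\mathcal{C}$ let $X_n$ be a $\mathbb{Z}$-valued random variable with law $p_{\mathcal{C}}(\cdot,n)$. Known fact (Konno): if $C$ is non-trivial, $X_n/n$ converges in distribution to the law with density $f_{\mathcal{C}}(x)=\dfrac{\sqrt{1-|a|^2}\,(1-\lambda_{\mathcal{C}}x)}{\pi(1-x^2)\sqrt{|a|^2-x^2}}$ for $x\in(-|a|,|a|)$ and $0$ elsewhere, where $\lambda_{\mathcal{C}}=|\alpha|^2-|\beta|^2+\dfrac{a\alpha\overline{b\beta}+\overline{a\alpha}b\beta}{|a|^2}$.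 Two setups $\mathcal{C}_1,\mathcal{C}_2$ with non-trivial coins are asymptotically distributionally equivalent, $\mathcal{C}_1\sim_l\mathcal{C}_2$, iff $f_{\mathcal{C}_1}=f_{\mathcal{C}_2}$. *)

theory Defs
  imports Complex_Main
begin

(* A coin C = a|u><u| + b|u><d| + c|d><u| + d|d><d| is represented by its four
  matrix entries (a,b,c,d); a coin state gamma = alpha|u> + beta|d> by (alpha,beta). *)

type_synonym coin = "complex \<times> complex \<times> complex \<times> complex"
type_synonym cstate = "complex \<times> complex"
type_synonym csetup = "coin \<times> cstate"

definition is_coin :: "coin \<Rightarrow> bool" where
  "is_coin C = (case C of (a,b,c,d) \<Rightarrow>
      cnj a * a + cnj c * c = 1 \<and> cnj b * b + cnj d * d = 1 \<and> cnj a * b + cnj c * d = 0)"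

definition nontrivial_coin :: "coin \<Rightarrow> bool" where
  "nontrivial_coin C = (case C of (a,b,c,d) \<Rightarrow> a * b * c * d \<noteq> 0)"

definition unit_state :: "cstate \<Rightarrow> bool" where
  "unit_state g = (case g of (\<alpha>,\<beta>) \<Rightarrow> (cmod \<alpha>)\<^sup>2 + (cmod \<beta>)\<^sup>2 = 1)"

(* lambda_C; the numerator a alpha conj(b beta) + conj(a alpha) b beta is real,
  we take its real part. *)
definition lam :: "csetup \<Rightarrow> real" where
  "lam S = (case S of ((a,b,c,d),(\<alpha>,\<beta>)) \<Rightarrow>
      (cmod \<alpha>)\<^sup>2 - (cmod \<beta>)\<^sup>2
      + Re (a * \<alpha> * cnj (b * \<beta>) + cnj (a * \<alpha>) * b * \<beta>) / (cmod a)\<^sup>2)"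

definition limit_density :: "csetup \<Rightarrow> real \<Rightarrow> real" where
  "limit_density S x = (case S of ((a,b,c,d),g) \<Rightarrow>
      if - cmod a < x \<and> x < cmod a then
        sqrt (1 - (cmod a)\<^sup>2) * (1 - lam S * x) /
          (pi * (1 - x\<^sup>2) * sqrt ((cmod a)\<^sup>2 - x\<^sup>2))
      else 0)"

definition asym_equiv :: "csetup \<Rightarrow> csetup \<Rightarrow> bool" where
  "asym_equiv S1 S2 = (limit_density S1 = limit_density S2)"

definition coin_theta :: "real \<Rightarrow> coin" where
  "coin_theta \<theta> = (complex_of_real (cos \<theta>), complex_of_real (sin \<theta>),
                    - complex_of_real (sin \<theta>), complex_of_real (cos \<theta>))"

definition gamma_phi_xi :: "real \<Rightarrow> real \<Rightarrow> cstate" where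
  "gamma_phi_xi \<phi> \<xi> = (complex_of_real (cos \<phi>),
                         complex_of_real (sin \<phi>) * exp (\<i> * complex_of_real \<xi>))"

definition param_csetup :: "real \<times> real \<times> real \<Rightarrow> csetup" where
  "param_csetup s = (case s of (\<phi>,\<xi>,\<theta>) \<Rightarrow> (coin_theta \<theta>, gamma_phi_xi \<phi> \<xi>))"

definition S_param :: "(real \<times> real \<times> real) set" where
  "S_param =
     {(\<phi>, 0, \<theta>) | \<phi> \<theta>. 0 < \<theta> \<and> \<theta> < pi/2 \<and> \<theta>/2 \<le> \<phi> \<and> \<phi> \<le> pi/4 + \<theta>/2}
   \<union> {(\<phi>, pi, \<theta>) | \<phi> \<theta>. 0 < \<theta> \<and> \<theta> < pi/2 \<and> pi/4 - \<theta>/2 < \<phi> \<and> \<phi> \<le> (pi - \<theta>)/2}"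

end

theory Submission
  imports Defs
begin
definition dens :: "real \<Rightarrow> real \<Rightarrow> real \<Rightarrow> real" where
 "dens A L x = (if - A < x \<and> x < A then sqrt (1 - A\<^sup>2) * (1 - L * x) /
          (pi * (1 - x\<^sup>2) * sqrt (A\<^sup>2 - x\<^sup>2)) else 0)"

lemma ld_eq: "limit_density ((a,b,c,d),g) = dens (cmod a) (lam ((a,b,c,d),g))"
  by (simp add: limit_density_def fun_eq_iff dens_def)

lemma dens_pos:
  assumes "0 < A" "A < 1" "\<bar>L\<bar> * A \<le> 1" "-A < x" "x < A"
  shows "dens A L x > 0"
proof -
  have x1: "\<bar>x\<bar> < A" using assms by auto
  have "\<bar>L * x\<bar> \<le> \<bar>L\<bar> * A" using x1 by (simp add: abs_mult mult_left_mono)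
  moreover have "\<bar>L * x\<bar> < 1 \<or> L = 0"
  proof (cases "L = 0")
    case False
    then have "\<bar>L\<bar> * \<bar>x\<bar> < \<bar>L\<bar> * A" using x1 by simp
    then show ?thesis using assms by (simp add: abs_mult)
  qed simp
  ultimately have "1 - L * x > 0" by auto
  moreover have "1 - x\<^sup>2 > 0"
  proof -
    have "\<bar>x\<bar> < 1" using x1 assms by linarith
    then show ?thesis using abs_square_less_1 by fastforce
  qed
  moreover have "A\<^sup>2 - x\<^sup>2 > 0"
  proof -
    have "\<bar>x\<bar>^2 < A^2" using x1 by (intro power_strict_mono) auto
    then show ?thesis by simp
  qed
  moreover have "1 - A\<^sup>2 > 0"
  proof -
    have "A^2 < 1^2" using assms by (intro power_strict_mono) auto
    then show ?thesis by simp
  qed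
  ultimately show ?thesis using assms by (simp add: dens_def)
qed

lemma dens_inj:
  assumes "dens A L = dens A' L'" "0 < A" "A < 1" "0 < A'" "A' < 1"
    "\<bar>L\<bar> * A \<le> 1" "\<bar>L'\<bar> * A' \<le> 1"
  shows "A = A' \<and> L = L'"
proof -
  have AA: "A = A'"
  proof (rule ccontr)
    assume "A \<noteq> A'"
    then consider "A < A'" | "A' < A" by linarith
    then show False
    proof cases
      case 1
      have "dens A' L' ((A+A')/2) > 0" using 1 assms by (intro dens_pos) auto
      moreover have "dens A L ((A+A')/2) = 0" using 1 by (simp add: dens_def)
      ultimately show False using assms(1) by simp
    next
      case 2
      have "dens A L ((A+A')/2) > 0" using 2 assms by (intro dens_pos) auto
      moreover have "dens A' L' ((A+A')/2) = 0" using 2 by (simp add: dens_def)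
      ultimately show False using assms(1) by simp
    qed
  qed
  define x where "x = A/2"
  have x: "-A < x" "x < A" "x \<noteq> 0" using assms by (auto simp: x_def)
  define k where "k = sqrt (1 - A\<^sup>2) / (pi * (1 - x\<^sup>2) * sqrt (A\<^sup>2 - x\<^sup>2))"
  have "dens A 0 x > 0" using x assms by (intro dens_pos) auto
  then have k: "k > 0" using x by (simp add: dens_def k_def)
  have "dens A L x = k * (1 - L * x)" "dens A L' x = k * (1 - L' * x)"
    using x by (simp_all add: dens_def k_def)
  then have "k * (1 - L * x) = k * (1 - L' * x)" using assms(1) AA by metis
  then have "1 - L * x = 1 - L' * x" using k by (metis mult_left_cancel less_irrefl)
  then have "L = L'" using x(3) by simp
  then show ?thesis using AA by simp
qed
lemma lam_param0:
  assumes "cos \<theta> > 0"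
  shows "lam (param_csetup (\<phi>, 0, \<theta>)) = cos (2*\<phi> - \<theta>) / cos \<theta>"
proof -
  have "lam (param_csetup (\<phi>, 0, \<theta>)) = (cos \<phi>)^2 - (sin \<phi>)^2 + 2 * cos \<theta> * cos \<phi> * sin \<theta> * sin \<phi> / (cos \<theta>)^2"
    by (simp add: lam_def param_csetup_def coin_theta_def gamma_phi_xi_def power2_eq_square)
  also have "\<dots> = cos (2*\<phi> - \<theta>) / cos \<theta>"
  proof -
    have c2: "cos (2*\<phi>) = (cos \<phi>)^2 - (sin \<phi>)^2" "sin (2*\<phi>) = 2 * sin \<phi> * cos \<phi>"
      by (simp_all add: cos_double sin_double)
    show ?thesis unfolding cos_diff c2 using assms by (simp add: field_simps power2_eq_square)
  qed
  finally show ?thesis .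
qed

lemma lam_parampi:
  assumes "cos \<theta> > 0"
  shows "lam (param_csetup (\<phi>, pi, \<theta>)) = cos (2*\<phi> + \<theta>) / cos \<theta>"
proof -
  have e: "exp (\<i> * complex_of_real pi) = -1"
    by (metis exp_pi_i mult.commute)
  have "lam (param_csetup (\<phi>, pi, \<theta>)) = (cos \<phi>)^2 - (sin \<phi>)^2 - 2 * cos \<theta> * cos \<phi> * sin \<theta> * sin \<phi> / (cos \<theta>)^2"
    by (simp add: lam_def param_csetup_def coin_theta_def gamma_phi_xi_def power2_eq_square e)
  also have "\<dots> = cos (2*\<phi> + \<theta>) / cos \<theta>"
  proof -
    have c2: "cos (2*\<phi>) = (cos \<phi>)^2 - (sin \<phi>)^2" "sin (2*\<phi>) = 2 * sin \<phi> * cos \<phi>"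
      by (simp_all add: cos_double sin_double)
    show ?thesis unfolding cos_add c2 using assms by (simp add: field_simps power2_eq_square)
  qed
  finally show ?thesis .
qed

lemma ld_param: "limit_density (param_csetup (\<phi>, \<xi>, \<theta>)) = dens \<bar>cos \<theta>\<bar> (lam (param_csetup (\<phi>, \<xi>, \<theta>)))"
  by (simp add: param_csetup_def coin_theta_def ld_eq)

lemma coin_norm:
  assumes "is_coin (a,b,c,d)"
  shows "(cmod a)^2 + (cmod b)^2 = 1"
proof -
  have n: "\<And>z. cnj z * z = complex_of_real ((cmod z)^2)"
    by (metis complex_norm_square mult.commute)
  have "complex_of_real ((cmod a)^2 + (cmod c)^2) = 1" "complex_of_real ((cmod b)^2 + (cmod d)^2) = 1"
    using assms unfolding is_coin_def n by simp_all
  then have 1: "(cmod a)^2 + (cmod c)^2 = 1" "(cmod b)^2 + (cmod d)^2 = 1"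
    using of_real_eq_1_iff by blast+
  have "cnj a * b = - (cnj c * d)" using assms unfolding is_coin_def
    by (simp add: eq_neg_iff_add_eq_0)
  then have "cmod (cnj a * b) = cmod (cnj c * d)" by (metis norm_minus_cancel)
  then have "cmod a * cmod b = cmod c * cmod d" by (simp add: norm_mult)
  then have "(cmod a)^2 * (cmod b)^2 = (cmod c)^2 * (cmod d)^2"
    by (metis power_mult_distrib)
  then have "(cmod a)^2 * (cmod b)^2 = (1 - (cmod a)^2) * (1 - (cmod b)^2)"
    using 1 by (metis add_diff_cancel_left')
  then show ?thesis by (simp add: algebra_simps)
qed
lemma cs_bound:
  fixes A B X Y :: real
  assumes "A^2 + B^2 = 1" "X^2 + Y^2 = 1"
  shows "A * X + B * Y \<le> 1"
proof -
  have "0 \<le> (A - X)^2 + (B - Y)^2" by simp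
  also have "\<dots> = 2 - 2 * (A * X + B * Y)"
    using assms by (simp add: power2_diff algebra_simps)
  finally show ?thesis by simp
qed

lemma lam_bound:
  assumes "is_coin (a,b,c,d)" "nontrivial_coin (a,b,c,d)" "unit_state (\<alpha>,\<beta>)"
  shows "\<bar>lam ((a,b,c,d),(\<alpha>,\<beta>))\<bar> * cmod a \<le> 1 \<and> 0 < cmod a \<and> cmod a < 1"
proof -
  define A where "A = cmod a"
  define B where "B = cmod b"
  define p where "p = cmod \<alpha>"
  define q where "q = cmod \<beta>"
  define z where "z = a * \<alpha> * cnj (b * \<beta>)"
  have AB: "A^2 + B^2 = 1" using coin_norm[OF assms(1)] by (simp add: A_def B_def)
  have pq: "p^2 + q^2 = 1" using assms(3) by (simp add: unit_state_def p_def q_def)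
  have a0: "a \<noteq> 0" "b \<noteq> 0" using assms(2) by (auto simp: nontrivial_coin_def)
  have A0: "A > 0" using a0 by (simp add: A_def)
  have B0: "B > 0" using a0 by (simp add: B_def)
  have A1: "A < 1"
  proof -
    have "A^2 < 1" using AB B0 by (smt (verit) zero_less_power)
    then show ?thesis using A0 by (smt (verit) one_le_power)
  qed
  have e: "a * \<alpha> * cnj (b * \<beta>) + cnj (a * \<alpha>) * b * \<beta> = z + cnj z"
    by (simp add: z_def mult.assoc mult.left_commute)
  have Re: "Re (z + cnj z) = 2 * Re z" by simp
  have cz: "cmod z = A * B * p * q" by (simp add: z_def norm_mult A_def B_def p_def q_def)
  have "\<bar>Re z\<bar> \<le> cmod z" by (rule abs_Re_le_cmod)
  define L where "L = lam ((a,b,c,d),(\<alpha>,\<beta>))"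
  have Ld: "L = p^2 - q^2 + 2 * Re z / A^2"
  proof -
    have "L = (cmod \<alpha>)^2 - (cmod \<beta>)^2 + Re (a * \<alpha> * cnj (b * \<beta>) + cnj (a * \<alpha>) * b * \<beta>) / (cmod a)^2"
      by (simp only: L_def lam_def prod.case)
    then show ?thesis unfolding e Re by (simp add: p_def q_def A_def)
  qed
  have "\<bar>L\<bar> * A \<le> (\<bar>p^2 - q^2\<bar> + 2 * \<bar>Re z\<bar> / A^2) * A"
    unfolding Ld using A0 by (intro mult_right_mono) (auto simp: abs_mult abs_divide intro!: order.trans[OF abs_triangle_ineq])
  also have "\<dots> \<le> (\<bar>p^2 - q^2\<bar> + 2 * (A * B * p * q) / A^2) * A"
    using \<open>\<bar>Re z\<bar> \<le> cmod z\<close> cz A0 by (intro mult_right_mono add_left_mono divide_right_mono) auto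
  also have "\<dots> = A * \<bar>p^2 - q^2\<bar> + B * (2 * p * q)"
    using A0 by (simp add: field_simps power2_eq_square)
  also have "\<dots> \<le> 1"
  proof (rule cs_bound[OF AB])
    have "\<bar>p^2 - q^2\<bar>^2 + (2 * p * q)^2 = (p^2 + q^2)^2"
      by (simp add: power2_eq_square algebra_simps)
    then show "\<bar>p^2 - q^2\<bar>^2 + (2 * p * q)^2 = 1" using pq by simp
  qed
  finally show ?thesis using A0 A1 by (simp add: L_def A_def)
qed
lemma param_facts:
  assumes "s \<in> S_param"
  obtains \<phi> \<xi> \<theta> where "s = (\<phi>, \<xi>, \<theta>)" "0 < \<theta>" "\<theta> < pi/2"
    "0 < cos \<theta>" "cos \<theta> < 1"
    "(\<xi> = 0 \<and> 0 \<le> 2*\<phi> - \<theta> \<and> 2*\<phi> - \<theta> \<le> pi/2 \<and>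
       lam (param_csetup s) * cos \<theta> = cos (2*\<phi> - \<theta>) \<and> 0 \<le> cos (2*\<phi> - \<theta>)) \<or>
     (\<xi> = pi \<and> pi/2 < 2*\<phi> + \<theta> \<and> 2*\<phi> + \<theta> \<le> pi \<and>
       lam (param_csetup s) * cos \<theta> = cos (2*\<phi> + \<theta>) \<and> cos (2*\<phi> + \<theta>) < 0)"
proof -
  obtain \<phi> \<xi> \<theta> where s: "s = (\<phi>, \<xi>, \<theta>)" by (cases s) auto
  have th: "0 < \<theta>" "\<theta> < pi/2" using assms s by (auto simp: S_param_def)
  have c0: "0 < cos \<theta>" using th by (intro cos_gt_zero) auto
  have c1: "cos \<theta> < 1"
  proof -
    have "cos \<theta> < cos 0" using th by (intro cos_monotone_0_pi) auto
    then show ?thesis by simp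
  qed
  have "(\<xi> = 0 \<and> 0 \<le> 2*\<phi> - \<theta> \<and> 2*\<phi> - \<theta> \<le> pi/2 \<and>
       lam (param_csetup s) * cos \<theta> = cos (2*\<phi> - \<theta>) \<and> 0 \<le> cos (2*\<phi> - \<theta>)) \<or>
     (\<xi> = pi \<and> pi/2 < 2*\<phi> + \<theta> \<and> 2*\<phi> + \<theta> \<le> pi \<and>
       lam (param_csetup s) * cos \<theta> = cos (2*\<phi> + \<theta>) \<and> cos (2*\<phi> + \<theta>) < 0)"
  proof (cases "\<xi> = 0")
    case True
    then have r: "0 \<le> 2*\<phi> - \<theta>" "2*\<phi> - \<theta> \<le> pi/2" using assms s by (auto simp: S_param_def)
    have "0 \<le> cos (2*\<phi> - \<theta>)" using r by (intro cos_ge_zero) auto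
    then show ?thesis using True r lam_param0[OF c0, of \<phi>] c0 s by simp
  next
    case False
    then have r: "\<xi> = pi" "pi/2 < 2*\<phi> + \<theta>" "2*\<phi> + \<theta> \<le> pi" using assms s
      by (auto simp: S_param_def)
    have "cos (2*\<phi> + \<theta>) < cos (pi/2)" using r by (intro cos_monotone_0_pi) auto
    then show ?thesis using r lam_parampi[OF c0, of \<phi>] c0 s by simp
  qed
  then show ?thesis using that s th c0 c1 by blast
qed

theorem theorem4:
  shows "(\<forall>C g. is_coin C \<and> nontrivial_coin C \<and> unit_state g \<longrightarrow>
            (\<exists>s\<in>S_param. asym_equiv (C, g) (param_csetup s)))
       \<and> (\<forall>s\<in>S_param. \<forall>s'\<in>S_param.
            asym_equiv (param_csetup s) (param_csetup s') \<longrightarrow> s = s')"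
proof (intro conjI allI impI ballI)
  fix C :: coin and g :: cstate
  assume h: "is_coin C \<and> nontrivial_coin C \<and> unit_state g"
  obtain a b c d where C: "C = (a,b,c,d)" by (cases C) auto
  obtain \<alpha> \<beta> where g: "g = (\<alpha>,\<beta>)" by (cases g) auto
  define A where "A = cmod a"
  define L where "L = lam (C, g)"
  have bd: "\<bar>L\<bar> * A \<le> 1" "0 < A" "A < 1" using lam_bound[of a b c d \<alpha> \<beta>] h
    by (simp_all add: C g L_def A_def)
  define \<theta> where "\<theta> = arccos A"
  have cth: "cos \<theta> = A" using bd by (simp add: \<theta>_def cos_arccos)
  have th: "0 < \<theta>" "\<theta> < pi/2"
  proof -
    show "0 < \<theta>" using arccos_lt_bounded[of A] bd by (simp add: \<theta>_def)
    have "arccos A < arccos 0" using bd by (intro arccos_less_arccos) auto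
    then show "\<theta> < pi/2" by (simp add: \<theta>_def)
  qed
  have "\<bar>L * A\<bar> \<le> 1" using bd by (simp add: abs_mult)
  then have LA: "-1 \<le> L * A" "L * A \<le> 1" by (auto simp: abs_le_iff)
  define s where "s = (if 0 \<le> L then ((\<theta> + arccos (L*A))/2, 0, \<theta>)
                      else ((arccos (L*A) - \<theta>)/2, pi, \<theta>))"
  have c0: "0 < cos \<theta>" using cth bd by simp
  have sS: "s \<in> S_param \<and> lam (param_csetup s) = L"
  proof (cases "0 \<le> L")
    case True
    have "0 \<le> L * A" using True bd by simp
    then have "arccos (L*A) \<le> pi/2" using LA by (intro arccos_le_pi2) auto
    moreover have "0 \<le> arccos (L*A)" using LA by (intro arccos_lbound) auto
    moreover have "lam (param_csetup s) = L"
    proof -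
      have "2 * ((\<theta> + arccos (L*A))/2) - \<theta> = arccos (L*A)" by (simp add: field_simps)
      then show ?thesis
        using True lam_param0[OF c0, of "(\<theta> + arccos (L*A))/2"] LA bd cth
        by (simp add: s_def cos_arccos)
    qed
    ultimately show ?thesis
    proof (intro conjI)
      define \<phi>0 where "\<phi>0 = (\<theta> + arccos (L*A))/2"
      have "s = (\<phi>0, 0, \<theta>)" using True by (simp add: s_def \<phi>0_def)
      moreover have "\<theta>/2 \<le> \<phi>0" "\<phi>0 \<le> pi/4 + \<theta>/2"
        using \<open>0 \<le> arccos (L*A)\<close> \<open>arccos (L*A) \<le> pi/2\<close> by (simp_all add: \<phi>0_def)
      ultimately show "s \<in> S_param" using th unfolding S_param_def by blast
    qed
  next
    case False
    have "L * A < 0" using False bd by (simp add: mult_neg_pos)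
    then have "arccos 0 < arccos (L*A)" using LA by (intro arccos_less_arccos) auto
    moreover have "arccos (L*A) \<le> pi" using LA by (intro arccos_ubound) auto
    moreover have "lam (param_csetup s) = L"
    proof -
      have "2 * ((arccos (L*A) - \<theta>)/2) + \<theta> = arccos (L*A)" by (simp add: field_simps)
      then show ?thesis
        using False lam_parampi[OF c0, of "(arccos (L*A) - \<theta>)/2"] LA bd cth
        by (simp add: s_def cos_arccos)
    qed
    ultimately show ?thesis
    proof (intro conjI)
      define \<phi>0 where "\<phi>0 = (arccos (L*A) - \<theta>)/2"
      have "s = (\<phi>0, pi, \<theta>)" using False by (simp add: s_def \<phi>0_def)
      moreover have "pi/4 - \<theta>/2 < \<phi>0" "\<phi>0 \<le> (pi - \<theta>)/2"
        using \<open>arccos 0 < arccos (L*A)\<close> \<open>arccos (L*A) \<le> pi\<close> by (simp_all add: \<phi>0_def)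
      ultimately show "s \<in> S_param" using th unfolding S_param_def by blast
    qed
  qed
  obtain p1 p2 p3 where sp: "s = (p1,p2,p3)" by (cases s) auto
  have p3: "p3 = \<theta>" using sp by (simp add: s_def split: if_splits)
  have "asym_equiv (C, g) (param_csetup s)"
    unfolding asym_equiv_def sp ld_param
    using sS cth c0 bd by (simp add: C ld_eq sp p3 flip: A_def L_def[unfolded C])
  then show "\<exists>s\<in>S_param. asym_equiv (C, g) (param_csetup s)" using sS by blast
next
  fix s s' assume s: "s \<in> S_param" and s': "s' \<in> S_param"
    and eq: "asym_equiv (param_csetup s) (param_csetup s')"
  obtain \<phi> \<xi> \<theta> where f: "s = (\<phi>, \<xi>, \<theta>)" "0 < \<theta>" "\<theta> < pi/2"
    "0 < cos \<theta>" "cos \<theta> < 1"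
    "(\<xi> = 0 \<and> 0 \<le> 2*\<phi> - \<theta> \<and> 2*\<phi> - \<theta> \<le> pi/2 \<and>
       lam (param_csetup s) * cos \<theta> = cos (2*\<phi> - \<theta>) \<and> 0 \<le> cos (2*\<phi> - \<theta>)) \<or>
     (\<xi> = pi \<and> pi/2 < 2*\<phi> + \<theta> \<and> 2*\<phi> + \<theta> \<le> pi \<and>
       lam (param_csetup s) * cos \<theta> = cos (2*\<phi> + \<theta>) \<and> cos (2*\<phi> + \<theta>) < 0)"
    using param_facts[OF s] by metis
  obtain \<phi>' \<xi>' \<theta>' where f': "s' = (\<phi>', \<xi>', \<theta>')" "0 < \<theta>'" "\<theta>' < pi/2"
    "0 < cos \<theta>'" "cos \<theta>' < 1"
    "(\<xi>' = 0 \<and> 0 \<le> 2*\<phi>' - \<theta>' \<and> 2*\<phi>' - \<theta>' \<le> pi/2 \<and>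
       lam (param_csetup s') * cos \<theta>' = cos (2*\<phi>' - \<theta>') \<and> 0 \<le> cos (2*\<phi>' - \<theta>')) \<or>
     (\<xi>' = pi \<and> pi/2 < 2*\<phi>' + \<theta>' \<and> 2*\<phi>' + \<theta>' \<le> pi \<and>
       lam (param_csetup s') * cos \<theta>' = cos (2*\<phi>' + \<theta>') \<and> cos (2*\<phi>' + \<theta>') < 0)"
    using param_facts[OF s'] by metis
  have b1: "\<bar>lam (param_csetup s)\<bar> * cos \<theta> \<le> 1"
  proof -
    have "\<bar>lam (param_csetup s)\<bar> * cos \<theta> = \<bar>lam (param_csetup s) * cos \<theta>\<bar>" using f by (simp add: abs_mult)
    then show ?thesis using f(6) by auto
  qed
  have b2: "\<bar>lam (param_csetup s')\<bar> * cos \<theta>' \<le> 1"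
  proof -
    have "\<bar>lam (param_csetup s')\<bar> * cos \<theta>' = \<bar>lam (param_csetup s') * cos \<theta>'\<bar>" using f' by (simp add: abs_mult)
    then show ?thesis using f'(6) by auto
  qed
  have "dens (cos \<theta>) (lam (param_csetup s)) = dens (cos \<theta>') (lam (param_csetup s'))"
    using eq f(1,4) f'(1,4) unfolding asym_equiv_def by (simp add: ld_param)
  then have ee: "cos \<theta> = cos \<theta>'" "lam (param_csetup s) = lam (param_csetup s')"
    using dens_inj f f' b1 b2 by blast+
  have tt: "\<theta> = \<theta>'"
    by (rule cos_inj_pi[of \<theta> \<theta>']) (use f(2,3) f'(2,3) ee(1) in linarith)+
  show "s = s'"
  proof -
    have cc: "lam (param_csetup s) * cos \<theta> = lam (param_csetup s') * cos \<theta>'" using ee by simp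
    from f(6) f'(6) cc tt show ?thesis
    proof (elim disjE conjE)
      assume x0: "\<xi> = 0" "\<xi>' = 0" and h: "0 \<le> 2*\<phi> - \<theta>" "2*\<phi> - \<theta> \<le> pi/2" "0 \<le> 2*\<phi>' - \<theta>'" "2*\<phi>' - \<theta>' \<le> pi/2"
        "lam (param_csetup s) * cos \<theta> = cos (2*\<phi> - \<theta>)" "lam (param_csetup s') * cos \<theta>' = cos (2*\<phi>' - \<theta>')"
      then have "2*\<phi> - \<theta> = 2*\<phi>' - \<theta>'"
        by (intro cos_inj_pi[of "2*\<phi> - \<theta>" "2*\<phi>' - \<theta>'"]) (use h cc pi_gt_zero in linarith)+
      then show ?thesis using f(1) f'(1) tt x0 by simp
    next
      assume x0: "\<xi> = pi" "\<xi>' = pi" and h: "pi/2 < 2*\<phi> + \<theta>" "2*\<phi> + \<theta> \<le> pi" "pi/2 < 2*\<phi>' + \<theta>'" "2*\<phi>' + \<theta>' \<le> pi"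
        "lam (param_csetup s) * cos \<theta> = cos (2*\<phi> + \<theta>)" "lam (param_csetup s') * cos \<theta>' = cos (2*\<phi>' + \<theta>')"
      then have "2*\<phi> + \<theta> = 2*\<phi>' + \<theta>'"
        by (intro cos_inj_pi[of "2*\<phi> + \<theta>" "2*\<phi>' + \<theta>'"]) (use h cc pi_gt_zero in linarith)+
      then show ?thesis using f(1) f'(1) tt x0 by simp
    qed (use cc in linarith)+
  qed
qed
end
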